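(* Let $\Phi=\{\phi_i\}_{i=1}^l$ be an arbitrary IFS of contractions on $\mathbb R^d$ and let $\mu=\mathfrak m\circ\pi^{-1}$ be the pushforward of a $\sigma$-invariant ergodic probability measure $\mathfrak m$ on $\mathcal D^{\mathbb N}$. Then $\mu$ is of pure type: either $\mu\ll\mathcal L$ or $\mu\perp\mathcal L$, where $\mathcal L$ is $d$-dimensional Lebesgue measure.
   Context: $\pi((a_j))=\lim_n\phi_{a_1}\circ\cdots\circ\phi_{a_n}(0)$; $\sigma$ is the left shift on $\mathcal D^{\mathbb N}$, $\mathcal D=\{1,\ldots,l\}$. *)

theory Defs
  imports "HOL-Probability.Probability"
begin

text \<open>Symbolic space D^N, with D a finite alphabet represented by a finite type 'i,
  carrying the product sigma-algebra of discrete sigma-algebras.\<close>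
definition symb_space :: "(nat \<Rightarrow> 'i) measure" where
  "symb_space = (\<Pi>\<^sub>M n\<in>(UNIV::nat set). count_space (UNIV::'i set))"

definition shift :: "(nat \<Rightarrow> 'i) \<Rightarrow> (nat \<Rightarrow> 'i)" where
  "shift a = (\<lambda>n. a (Suc n))"

text \<open>phi_{a_1} o ... o phi_{a_n} (indices start at 0 here).\<close>
fun ifs_comp :: "('i \<Rightarrow> 'a \<Rightarrow> 'a) \<Rightarrow> (nat \<Rightarrow> 'i) \<Rightarrow> nat \<Rightarrow> 'a \<Rightarrow> 'a" where
  "ifs_comp \<phi> a 0 = id"
| "ifs_comp \<phi> a (Suc n) = ifs_comp \<phi> a n \<circ> \<phi> (a n)"

definition ifs_proj :: "('i \<Rightarrow> 'a::real_normed_vector \<Rightarrow> 'a) \<Rightarrow> (nat \<Rightarrow> 'i) \<Rightarrow> 'a" where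
  "ifs_proj \<phi> a = lim (\<lambda>n. ifs_comp \<phi> a n 0)"

definition contraction :: "('a::metric_space \<Rightarrow> 'a) \<Rightarrow> bool" where
  "contraction f \<longleftrightarrow> (\<exists>r<1. \<forall>x y. dist (f x) (f y) \<le> r * dist x y)"

definition shift_invariant :: "(nat \<Rightarrow> 'i) measure \<Rightarrow> bool" where
  "shift_invariant m \<longleftrightarrow> shift \<in> measurable m m \<and> distr m m shift = m"

definition shift_ergodic :: "(nat \<Rightarrow> 'i) measure \<Rightarrow> bool" where
  "shift_ergodic m \<longleftrightarrow> shift_invariant m \<and>
     (\<forall>A\<in>sets m. shift -` A \<inter> space m = A \<longrightarrow> measure m A = 0 \<or> measure m A = 1)"

definition mutually_singular :: "'a measure \<Rightarrow> 'a measure \<Rightarrow> bool" where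
  "mutually_singular M N \<longleftrightarrow>
     (\<exists>A\<in>sets M. emeasure M A = 0 \<and> emeasure N (space N - A) = 0)"

end

theory Submission imports Defs begin

lemma contr_unif:
  fixes \<phi> :: "'i::finite \<Rightarrow> 'a::metric_space \<Rightarrow> 'a"
  assumes "\<And>i. contraction (\<phi> i)"
  shows "\<exists>r. 0 \<le> r \<and> r < 1 \<and> (\<forall>i x y. dist (\<phi> i x) (\<phi> i y) \<le> r * dist x y)"
proof -
  have "\<forall>i. \<exists>r. r < 1 \<and> (\<forall>x y. dist (\<phi> i x) (\<phi> i y) \<le> r * dist x y)"
    using assms unfolding contraction_def by blast
  then obtain R where R: "\<And>i. R i < 1" "\<And>i x y. dist (\<phi> i x) (\<phi> i y) \<le> R i * dist x y"
    by metis
  define r where "r = max 0 (Max (range R))"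
  have "Max (range R) < 1" using R(1) by (simp add: Max_less_iff)
  hence "r < 1" "0 \<le> r" by (auto simp: r_def)
  moreover have "dist (\<phi> i x) (\<phi> i y) \<le> r * dist x y" for i x y
  proof -
    have "R i \<le> r" unfolding r_def by (simp add: le_max_iff_disj)
    hence "R i * dist x y \<le> r * dist x y" by (simp add: mult_right_mono)
    thus ?thesis using R(2)[of i x y] by linarith
  qed
  ultimately show ?thesis by blast
qed

lemma ifs_comp_dist:
  assumes "0 \<le> r" "\<And>i x y. dist (\<phi> i x) (\<phi> i y) \<le> r * dist x y"
  shows "dist (ifs_comp \<phi> a n x) (ifs_comp \<phi> a n y) \<le> r ^ n * dist x y"
proof (induction n arbitrary: x y)
  case 0 thus ?case by simp
next
  case (Suc n)
  have "dist (ifs_comp \<phi> a (Suc n) x) (ifs_comp \<phi> a (Suc n) y)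
      = dist (ifs_comp \<phi> a n (\<phi> (a n) x)) (ifs_comp \<phi> a n (\<phi> (a n) y))" by simp
  also have "\<dots> \<le> r ^ n * dist (\<phi> (a n) x) (\<phi> (a n) y)" by (rule Suc.IH)
  also have "\<dots> \<le> r ^ n * (r * dist x y)"
    by (rule mult_left_mono[OF assms(2)]) (use assms(1) in simp)
  finally show ?case by (simp add: mult_ac)
qed

lemma ifs_comp_Suc'':
  "ifs_comp \<phi> a (Suc n) x = \<phi> (a 0) (ifs_comp \<phi> (shift a) n x)"
  by (induction n arbitrary: x) (auto simp: shift_def)

lemma ifs_comp_Suc':
  "ifs_comp \<phi> a (Suc n) = \<phi> (a 0) \<circ> ifs_comp \<phi> (shift a) n"
  by (rule ext) (simp only: ifs_comp_Suc'' comp_apply)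

lemma ifs_comp_conv:
  fixes \<phi> :: "'i::finite \<Rightarrow> 'a::euclidean_space \<Rightarrow> 'a"
  assumes "0 \<le> r" "r < 1" "\<And>i x y. dist (\<phi> i x) (\<phi> i y) \<le> r * dist x y"
  shows "(\<lambda>n. ifs_comp \<phi> a n 0) \<longlonglongrightarrow> ifs_proj \<phi> a"
proof -
  define c where "c = Max (range (\<lambda>i. norm (\<phi> i 0)))"
  define d where "d k = ifs_comp \<phi> a (Suc k) 0 - ifs_comp \<phi> a k 0" for k
  have "norm (d k) \<le> c * r ^ k" for k
  proof -
    have "norm (d k) = dist (ifs_comp \<phi> a k (\<phi> (a k) 0)) (ifs_comp \<phi> a k 0)"
      by (simp add: d_def dist_norm)
    also have "\<dots> \<le> r ^ k * dist (\<phi> (a k) 0) 0" by (rule ifs_comp_dist[OF assms(1,3)])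
    also have "\<dots> \<le> r ^ k * c"
      by (rule mult_left_mono) (auto simp: c_def assms(1))
    finally show ?thesis by (simp add: mult.commute)
  qed
  moreover have "summable (\<lambda>k. c * r ^ k)" using assms by (simp add: summable_geometric)
  ultimately have "summable d" by (rule summable_comparison_test'[rotated])
  hence "(\<lambda>n. \<Sum>k<n. d k) \<longlonglongrightarrow> suminf d" by (rule summable_LIMSEQ)
  moreover have "(\<Sum>k<n. d k) = ifs_comp \<phi> a n 0" for n
    unfolding d_def by (subst sum_lessThan_telescope) simp
  ultimately have "(\<lambda>n. ifs_comp \<phi> a n 0) \<longlonglongrightarrow> suminf d" by simp
  thus ?thesis unfolding ifs_proj_def by (simp add: limI)
qed

lemma lip_tendsto:
  assumes "\<And>x y. dist (f x) (f y) \<le> r * dist x y" "g \<longlonglongrightarrow> L" "0 \<le> r"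
  shows "(\<lambda>n. f (g n)) \<longlonglongrightarrow> f L"
proof -
  have "(\<lambda>n. dist (g n) L) \<longlonglongrightarrow> 0" using assms(2) tendsto_dist_iff by blast
  hence h: "(\<lambda>n. r * dist (g n) L) \<longlonglongrightarrow> 0" by (simp add: tendsto_mult_right_zero)
  have "(\<lambda>n. dist (f (g n)) (f L)) \<longlonglongrightarrow> 0"
    by (rule tendsto_sandwich[OF _ _ tendsto_const h]) (auto simp: assms(1) intro: always_eventually)
  thus ?thesis using tendsto_dist_iff by blast
qed

lemma ifs_proj_eq:
  fixes \<phi> :: "'i::finite \<Rightarrow> 'a::euclidean_space \<Rightarrow> 'a"
  assumes "0 \<le> r" "r < 1" "\<And>i x y. dist (\<phi> i x) (\<phi> i y) \<le> r * dist x y"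
  shows "ifs_proj \<phi> a = \<phi> (a 0) (ifs_proj \<phi> (shift a))"
proof -
  have 1: "(\<lambda>n. ifs_comp \<phi> a (Suc n) 0) \<longlonglongrightarrow> ifs_proj \<phi> a"
    using LIMSEQ_Suc[OF ifs_comp_conv[OF assms]] .
  have "(\<lambda>n. \<phi> (a 0) (ifs_comp \<phi> (shift a) n 0)) \<longlonglongrightarrow> \<phi> (a 0) (ifs_proj \<phi> (shift a))"
    by (rule lip_tendsto[OF assms(3) ifs_comp_conv[OF assms] assms(1)])
  hence "(\<lambda>n. ifs_comp \<phi> a (Suc n) 0) \<longlonglongrightarrow> \<phi> (a 0) (ifs_proj \<phi> (shift a))"
    by (simp del: ifs_comp.simps add: ifs_comp_Suc'')
  with 1 show ?thesis using LIMSEQ_unique by blast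
qed

lemma ifs_comp_meas:
  "(\<lambda>a. ifs_comp \<phi> a n x) \<in> borel_measurable (symb_space :: (nat \<Rightarrow> 'i::finite) measure)"
proof (induction n arbitrary: x)
  case 0 thus ?case by simp
next
  case (Suc n)
  have "(\<lambda>a. (\<lambda>i a. ifs_comp \<phi> a n (\<phi> i x)) (a n) a) \<in> borel_measurable (symb_space :: (nat \<Rightarrow> 'i::finite) measure)"
    by (rule measurable_compose_countable[OF Suc.IH])
       (unfold symb_space_def, rule measurable_component_singleton, simp)
  thus ?case by simp
qed

lemma ifs_proj_meas:
  fixes \<phi> :: "'i::finite \<Rightarrow> 'a::euclidean_space \<Rightarrow> 'a"
  assumes "0 \<le> r" "r < 1" "\<And>i x y. dist (\<phi> i x) (\<phi> i y) \<le> r * dist x y"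
  shows "ifs_proj \<phi> \<in> borel_measurable (symb_space :: (nat \<Rightarrow> 'i) measure)"
  by (rule borel_measurable_LIMSEQ_metric[OF ifs_comp_meas ifs_comp_conv[OF assms]])

lemma space_symb: "space symb_space = UNIV"
  by (simp add: symb_space_def space_PiM)


fun wcomp :: "('i \<Rightarrow> 'a \<Rightarrow> 'a) \<Rightarrow> 'i list \<Rightarrow> 'a \<Rightarrow> 'a" where
  "wcomp \<phi> [] = id"
| "wcomp \<phi> (i # w) = \<phi> i \<circ> wcomp \<phi> w"

lemma wcomp_lip:
  assumes "0 \<le> r" "r < 1" "\<And>i x y. dist (\<phi> i x) (\<phi> i y) \<le> r * dist x y"
  shows "dist (wcomp \<phi> w x) (wcomp \<phi> w y) \<le> dist x y"
proof (induction w arbitrary: x y)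
  case Nil thus ?case by simp
next
  case (Cons i w)
  have "dist (\<phi> i (wcomp \<phi> w x)) (\<phi> i (wcomp \<phi> w y)) \<le> r * dist (wcomp \<phi> w x) (wcomp \<phi> w y)"
    by (rule assms(3))
  also have "\<dots> \<le> 1 * dist (wcomp \<phi> w x) (wcomp \<phi> w y)"
    using assms(2) by (intro mult_right_mono) auto
  finally show ?case using Cons.IH[of x y] by simp
qed

lemma null_image:
  fixes f :: "'a::euclidean_space \<Rightarrow> 'a"
  assumes "\<And>x y. dist (f x) (f y) \<le> dist x y" "K \<in> null_sets lborel" "compact K"
  shows "f ` K \<in> null_sets lborel"
proof -
  have c: "continuous_on K f"
    by (rule lipschitz_on_continuous_on[of 1], rule lipschitz_onI) (use assms(1) in auto)
  have b: "f ` K \<in> sets lborel"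
    using compact_continuous_image[OF c assms(3)] by (simp add: borel_closed compact_imp_closed)
  have "negligible K" using assms(2) null_sets_completion_iff[of K lborel] null_setsD2[OF assms(2)]
    by (simp add: negligible_iff_null_sets)
  hence "negligible (f ` K)"
    by (rule negligible_locally_Lipschitz_image[OF order_refl])
       (rule exI[of _ UNIV], rule exI[of _ 1], use assms(1) in \<open>auto simp: dist_norm\<close>)
  thus ?thesis using b null_sets_completion_iff[of "f ` K" lborel]
    by (simp add: negligible_iff_null_sets)
qed

theorem mainTheorem18:
  fixes \<phi> :: "'i::finite \<Rightarrow> 'a::euclidean_space \<Rightarrow> 'a"
    and m :: "(nat \<Rightarrow> 'i) measure"
  assumes contr: "\<And>i. contraction (\<phi> i)"
    and prob: "prob_space m"
    and sets_m: "sets m = sets symb_space"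
    and erg: "shift_ergodic m"
  shows "absolutely_continuous lborel (distr m lborel (ifs_proj \<phi>))
       \<or> mutually_singular lborel (distr m lborel (ifs_proj \<phi>))"
proof (rule disjCI)
  interpret prob_space m by (rule prob)
  obtain r where r: "0 \<le> r" "r < 1" "\<And>i x y. dist (\<phi> i x) (\<phi> i y) \<le> r * dist x y"
    using contr_unif[of \<phi>] contr by blast
  define \<pi> where "\<pi> = ifs_proj \<phi>"
  define \<mu> where "\<mu> = distr m lborel \<pi>"
  have sp: "space m = UNIV" using sets_eq_imp_space_eq[OF sets_m] space_symb by simp
  have \<pi>m: "\<pi> \<in> borel_measurable m"
    unfolding \<pi>_def by (subst measurable_cong_sets[OF sets_m refl]) (rule ifs_proj_meas[OF r])
  hence \<pi>ml: "\<pi> \<in> measurable m lborel" by simp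
  have sh: "shift \<in> measurable m m" "distr m m shift = m"
    using erg unfolding shift_ergodic_def shift_invariant_def by blast+
  have sets_mu: "sets \<mu> = sets borel" unfolding \<mu>_def by simp
  have mu_eq: "emeasure \<mu> B = emeasure m (\<pi> -` B)" if "B \<in> sets borel" for B
    unfolding \<mu>_def using that \<pi>ml by (simp add: emeasure_distr sp)
  have fin_mu: "emeasure \<mu> (space \<mu>) \<noteq> \<infinity>"
    using mu_eq[of UNIV] unfolding \<mu>_def by simp
  assume "\<not> mutually_singular lborel (distr m lborel (ifs_proj \<phi>))"
  hence nms: "\<not> mutually_singular lborel \<mu>" unfolding \<mu>_def \<pi>_def .
  show "absolutely_continuous lborel (distr m lborel (ifs_proj \<phi>))"
    unfolding \<mu>_def[symmetric] \<pi>_def[symmetric] absolutely_continuous_def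
  proof (rule ccontr)
    assume "\<not> null_sets lborel \<subseteq> null_sets \<mu>"
    then obtain N where N: "N \<in> null_sets lborel" "N \<notin> null_sets \<mu>" by blast
    have Nb: "N \<in> sets borel" using N(1) by auto
    have "emeasure \<mu> N \<noteq> 0" using N Nb sets_mu by auto
    hence "(SUP K \<in> {K. K \<subseteq> N \<and> compact K}. emeasure \<mu> K) \<noteq> 0"
      using inner_regular[OF sets_mu fin_mu Nb] by simp
    have "\<exists>K\<in>{K. K \<subseteq> N \<and> compact K}. emeasure \<mu> K \<noteq> 0"
    proof (rule ccontr)
      assume "\<not> ?thesis"
      hence "(SUP K \<in> {K. K \<subseteq> N \<and> compact K}. emeasure \<mu> K) = (SUP K \<in> {K. K \<subseteq> N \<and> compact K}. 0)"
        by (intro SUP_cong) auto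
      also have "\<dots> = 0" by (rule SUP_const) auto
      finally show False using \<open>(SUP K \<in> {K. K \<subseteq> N \<and> compact K}. emeasure \<mu> K) \<noteq> 0\<close> by simp
    qed
    then obtain K where K: "K \<subseteq> N" "compact K" "emeasure \<mu> K \<noteq> 0" by blast
    have Kb: "K \<in> sets borel" by (simp add: K(2) borel_compact)
    have Kn: "K \<in> null_sets lborel" using null_sets_subset[OF N(1) _ K(1)] Kb by simp
    define Z where "Z = (\<Union>w\<in>UNIV. wcomp \<phi> w ` K)"
    have Zn: "Z \<in> null_sets lborel" unfolding Z_def
      by (rule null_sets_UN') (simp, rule null_image[OF wcomp_lip[OF r] Kn K(2)])
    hence Zb: "Z \<in> sets borel" by auto
    have KZ: "K \<subseteq> Z"
    proof
      fix x assume "x \<in> K"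
      thus "x \<in> Z" unfolding Z_def using UN_I[of "[]" UNIV x "\<lambda>w. wcomp \<phi> w ` K"] by simp
    qed
    have Zcl: "\<phi> i z \<in> Z" if zZ: "z \<in> Z" for i z
    proof -
      obtain w k where wk: "k \<in> K" "z = wcomp \<phi> w k" using zZ unfolding Z_def by blast
      hence "\<phi> i z = wcomp \<phi> (i # w) k" by simp
      thus ?thesis unfolding Z_def using wk(1) by blast
    qed
    define A where "A = \<pi> -` Z"
    have A: "A \<in> sets m" unfolding A_def using measurable_sets[OF \<pi>m Zb] sp by simp
    have shA: "shift -` A \<subseteq> A"
    proof
      fix a assume "a \<in> shift -` A"
      hence "\<pi> (shift a) \<in> Z" by (simp add: A_def)
      hence "\<phi> (a 0) (\<pi> (shift a)) \<in> Z" by (rule Zcl)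
      thus "a \<in> A" unfolding A_def \<pi>_def using ifs_proj_eq[OF r, where a=a] by simp
    qed
    have shS: "shift -` B \<in> sets m" if "B \<in> sets m" for B
      using measurable_sets[OF sh(1) that] sp by simp
    have shM: "measure m (shift -` B) = measure m B" if "B \<in> sets m" for B
      using measure_distr[OF sh(1) that] sh(2) sp by simp
    define S where "S n = (shift ^^ n) -` A" for n
    have S_Suc: "S (Suc n) = shift -` S n" for n
      unfolding S_def by (simp only: funpow_Suc_right vimage_comp)
    have S_sets: "S n \<in> sets m" for n
    proof (induction n)
      case 0 show ?case using A by (simp add: S_def)
    next
      case (Suc n) thus ?case by (simp only: S_Suc shS)
    qed
    have S_meas: "measure m (S n) = measure m A" for n
    proof (induction n)
      case 0 show ?case by (simp add: S_def)
    next
      case (Suc n) thus ?case by (simp only: S_Suc shM[OF S_sets])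
    qed
    have S_dec: "S (Suc n) \<subseteq> S n" for n
    proof (induction n)
      case 0 show ?case using shA by (simp add: S_Suc, simp add: S_def)
    next
      case (Suc n) thus ?case by (simp only: S_Suc) blast
    qed
    hence decS: "decseq S" by (simp add: decseq_SucI)
    define A' where "A' = (\<Inter>n. S n)"
    have A'm: "A' \<in> sets m" unfolding A'_def using S_sets by auto
    have "shift -` A' = (\<Inter>n. S (Suc n))" unfolding A'_def S_Suc by auto
    also have "\<dots> = A'" unfolding A'_def
    proof
      show "(\<Inter>n. S (Suc n)) \<subseteq> (\<Inter>n. S n)"
      proof
        fix x assume x: "x \<in> (\<Inter>n. S (Suc n))"
        show "x \<in> (\<Inter>n. S n)"
        proof
          fix n show "x \<in> S n" using x S_dec[of n] by auto
        qed
      qed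
    qed auto
    finally have invA': "shift -` A' \<inter> space m = A'" by (simp add: sp)
    have "(\<lambda>n. measure m (S n)) \<longlonglongrightarrow> measure m A'"
      unfolding A'_def by (rule finite_Lim_measure_decseq) (use S_sets decS in auto)
    hence "(\<lambda>n. measure m A) \<longlonglongrightarrow> measure m A'" by (simp only: S_meas)
    hence mA': "measure m A' = measure m A" using LIMSEQ_unique[OF tendsto_const] by metis
    have "measure m A' = 0 \<or> measure m A' = 1"
      using erg A'm invA' unfolding shift_ergodic_def by blast
    hence mA: "measure m A = 0 \<or> measure m A = 1" using mA' by simp
    have "emeasure \<mu> K \<le> emeasure \<mu> Z" by (rule emeasure_mono[OF KZ]) (simp add: sets_mu Zb)
    also have "\<dots> = emeasure m A" unfolding A_def by (rule mu_eq[OF Zb])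
    finally have "measure m A \<noteq> 0" using K(3) by (auto simp: emeasure_eq_measure)
    hence "measure m A = 1" using mA by simp
    hence "measure m (space m - A) = 0" using prob_compl[OF A] by simp
    moreover have "UNIV - Z \<in> sets borel" using Zb by auto
    hence "emeasure \<mu> (UNIV - Z) = emeasure m (\<pi> -` (UNIV - Z))" by (rule mu_eq)
    moreover have "\<pi> -` (UNIV - Z) = space m - A" unfolding A_def sp by auto
    ultimately have "emeasure \<mu> (UNIV - Z) = 0"
      using A by (simp add: emeasure_eq_measure)
    moreover have "space \<mu> = UNIV" unfolding \<mu>_def by simp
    moreover have "emeasure lborel Z = 0" using Zn by auto
    moreover have "Z \<in> sets lborel" using Zb by simp
    ultimately have "mutually_singular lborel \<mu>"
      unfolding mutually_singular_def by metis
    with nms show False by simp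
  qed
qed

end
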